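(* Let $\varepsilon>0$. The equilibrium point $$\overline{\mathbf x_0}=\Big(-\frac{a}{a_1},-\frac{b}{a_2},-\frac{c}{a_3}\Big)$$ of the $\varepsilon$-revised system $$\dot{\mathbf x}=\mathbf x\times\mathbf m(\mathbf x)+\varepsilon[(\mathbf x\times\mathbf m(\mathbf x))\times\mathbf m(\mathbf x)]$$ is Lyapunov stable.
   Context: Fix constants $0<a_1<a_2<a_3$ and $a,b,c\in\mathbb R$. Set $\mathbf m(\mathbf x)=(a_1x^1+a,\ a_2x^2+b,\ a_3x^3+c)$; $\times$ is the cross product in $\mathbb R^3$. Note that $\mathbf m(\overline{\mathbf x_0})=\mathbf 0$. *)

theory Defs
  imports "HOL-Analysis.Analysis"
begin

definition mfield :: "real \<Rightarrow> real \<Rightarrow> real \<Rightarrow> real \<Rightarrow> real \<Rightarrow> real \<Rightarrow> real^3 \<Rightarrow> real^3" where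
  "mfield a1 a2 a3 a b c x = vector [a1 * x$1 + a, a2 * x$2 + b, a3 * x$3 + c]"

definition revised_field :: "real \<Rightarrow> real \<Rightarrow> real \<Rightarrow> real \<Rightarrow> real \<Rightarrow> real \<Rightarrow> real \<Rightarrow> real^3 \<Rightarrow> real^3" where
  "revised_field a1 a2 a3 a b c eps x =
     cross3 x (mfield a1 a2 a3 a b c x)
     + eps *\<^sub>R cross3 (cross3 x (mfield a1 a2 a3 a b c x)) (mfield a1 a2 a3 a b c x)"

definition is_solution_on :: "(real^3 \<Rightarrow> real^3) \<Rightarrow> (real \<Rightarrow> real^3) \<Rightarrow> real \<Rightarrow> bool" where
  "is_solution_on f x T \<longleftrightarrow>
     (\<forall>t\<in>{0..T}. (x has_vector_derivative f (x t)) (at t within {0..T}))"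

definition lyapunov_stable :: "(real^3 \<Rightarrow> real^3) \<Rightarrow> real^3 \<Rightarrow> bool" where
  "lyapunov_stable f x0 \<longleftrightarrow>
     (\<forall>e>0. \<exists>d>0. \<forall>x T. is_solution_on f x T \<and> norm (x 0 - x0) < d \<longrightarrow>
        (\<forall>t\<in>{0..T}. norm (x t - x0) < e))"

end

theory Submission
  imports Defs
begin

lemma norm3_sq: "(norm (y::real^3))^2 = (y$1)^2 + (y$2)^2 + (y$3)^2"
  by (simp add: norm_vec_def L2_set_def sum_3)

lemma m_orth:
  "inner (mfield a1 a2 a3 a b c z) (revised_field a1 a2 a3 a b c eps z) = 0"
  unfolding revised_field_def
  by (simp add: inner_add_right dot_cross_self)

theorem theorem6p2:
  fixes a1 a2 a3 a b c eps :: real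
  assumes "0 < a1" and "a1 < a2" and "a2 < a3" and "eps > 0"
  shows "lyapunov_stable (revised_field a1 a2 a3 a b c eps)
           (vector [- a / a1, - b / a2, - c / a3])"
proof -
  let ?f = "revised_field a1 a2 a3 a b c eps"
  let ?x0 = "vector [- a / a1, - b / a2, - c / a3] :: real^3"
  define W where "W z = a1 * (z$1 + a/a1)^2 + a2 * (z$2 + b/a2)^2 + a3 * (z$3 + c/a3)^2" for z :: "real^3"
  have a2p: "a2 > 0" "a3 > 0" using assms by auto
  have Wlow: "a1 * (norm (z - ?x0))^2 \<le> W z" for z
  proof -
    have "a1 * (z$2 + b/a2)^2 \<le> a2 * (z$2 + b/a2)^2" "a1 * (z$3 + c/a3)^2 \<le> a3 * (z$3 + c/a3)^2"
      using assms by (auto intro: mult_right_mono)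
    then show ?thesis unfolding W_def norm3_sq by (simp add: algebra_simps)
  qed
  have Whigh: "W z \<le> a3 * (norm (z - ?x0))^2" for z
  proof -
    have "a1 * (z$1 + a/a1)^2 \<le> a3 * (z$1 + a/a1)^2" "a2 * (z$2 + b/a2)^2 \<le> a3 * (z$2 + b/a2)^2"
      using assms by (auto intro: mult_right_mono)
    then show ?thesis unfolding W_def norm3_sq by (simp add: algebra_simps)
  qed
  have Wconst: "W (x t) = W (x 0)" if sol: "is_solution_on ?f x T" and t: "t \<in> {0..T}" for x T t
  proof -
    have "\<exists>k. \<forall>s\<in>{0..T}. W (x s) = k"
    proof (rule has_field_derivative_zero_constant)
      show "convex {0..T}" by simp
      fix s assume s: "s \<in> {0..T}"
      have D: "(x has_vector_derivative ?f (x s)) (at s within {0..T})"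
        using sol s unfolding is_solution_on_def by auto
      have Di: "((\<lambda>t. x t $ i) has_vector_derivative (?f (x s)) $ i) (at s within {0..T})" for i
        using bounded_linear.has_vector_derivative[OF bounded_linear_vec_nth D] by simp
      have Di': "((\<lambda>t. x t $ i) has_field_derivative (?f (x s)) $ i) (at s within {0..T})" for i
        using Di[of i] by (simp add: has_real_derivative_iff_has_vector_derivative)
      have Sq: "((\<lambda>t. k * (x t $ i + r)^2) has_field_derivative k * (2 * (x s $ i + r) * (?f (x s)) $ i)) (at s within {0..T})" for k r i
      proof -
        have "((\<lambda>t. x t $ i + r) has_field_derivative (?f (x s)) $ i) (at s within {0..T})"
          using DERIV_add[OF Di'[of i] DERIV_const[of r]] by simp
        from DERIV_cmult[OF DERIV_power[OF this, of 2], of k] show ?thesis by (simp add: algebra_simps)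
      qed
      have "((\<lambda>t. W (x t)) has_field_derivative
          a1 * (2 * (x s $ 1 + a/a1) * (?f (x s)) $ 1) + a2 * (2 * (x s $ 2 + b/a2) * (?f (x s)) $ 2)
          + a3 * (2 * (x s $ 3 + c/a3) * (?f (x s)) $ 3)) (at s within {0..T})"
        unfolding W_def by (intro DERIV_add Sq)
      moreover have "a1 * (2 * (x s $ 1 + a/a1) * (?f (x s)) $ 1) + a2 * (2 * (x s $ 2 + b/a2) * (?f (x s)) $ 2)
          + a3 * (2 * (x s $ 3 + c/a3) * (?f (x s)) $ 3) = 2 * inner (mfield a1 a2 a3 a b c (x s)) (?f (x s))"
        using assms a2p by (simp add: mfield_def inner_vec_def sum_3 algebra_simps)
      ultimately show "((\<lambda>t. W (x t)) has_field_derivative 0) (at s within {0..T})"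
        by (simp add: m_orth)
    qed
    then obtain k where "\<forall>s\<in>{0..T}. W (x s) = k" by blast
    moreover have "0 \<in> {0..T}" using t by auto
    ultimately show ?thesis using t by simp
  qed
  show ?thesis unfolding lyapunov_stable_def
  proof (intro allI impI)
    fix e :: real assume e: "e > 0"
    show "\<exists>d>0. \<forall>x T. is_solution_on ?f x T \<and> norm (x 0 - ?x0) < d \<longrightarrow>
        (\<forall>t\<in>{0..T}. norm (x t - ?x0) < e)"
    proof (intro exI conjI allI impI ballI)
      show "e * a1 / a3 > 0" using e assms by simp
      fix x T t assume H: "is_solution_on ?f x T \<and> norm (x 0 - ?x0) < e * a1 / a3" and t: "t \<in> {0..T}"
      have "a1 * (norm (x t - ?x0))^2 \<le> a3 * (norm (x 0 - ?x0))^2"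
        using Wlow[of "x t"] Whigh[of "x 0"] Wconst[of x T t] H t by linarith
      also have "\<dots> < a3 * (e * a1 / a3)^2"
        using H a2p by (intro mult_strict_left_mono power_strict_mono) auto
      also have "\<dots> = a1 * (e^2 * (a1 / a3))" using a2p by (simp add: power2_eq_square field_simps)
      also have "\<dots> \<le> a1 * e^2" using assms e
        by (intro mult_left_mono) (auto intro!: mult_left_le simp: field_simps)
      finally have "(norm (x t - ?x0))^2 < e^2" using assms by simp
      then show "norm (x t - ?x0) < e" using e by (simp add: power_less_imp_less_base)
    qed
  qed
qed

end
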